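(* Let $(X,b,m)$ be a connected weighted graph satisfying conditions (B) and (M), let $D\subset X$ and $\Omega:=X\setminus D$. Then $\mathrm{Covr}(D)=\mathrm{Inr}(\Omega)$.
   Context: A weighted graph $(X,b,m)$: $X$ countable, $b:X\times X\to[0,\infty)$ symmetric with $b(x,x)=0$ and $\sum_y b(x,y)<\infty$, $m:X\to(0,\infty)$. Condition (B): $\sup_x\frac{1}{m(x)}\sum_y b(x,y)<\infty$. Condition (M): $\sup_x m(x)<\infty$. A path is $\gamma=(x_0,\dots,x_k)$ with $b(x_j,x_{j+1})>0$, of length $L(\gamma)=\sum_{j=0}^{k-1}1/b(x_j,x_{j+1})$ (trivial paths have length $0$); connected means any two points are joined by a path; $d(x,y)$ is the infimum of lengths of paths from $x$ to $y$. $U_r(x):=\{y:d(x,y)<r\}$, $B_r(x):=\{y:d(x,y)\le r\}$. The inradius is $\mathrm{Inr}(\Omega):=\sup\{r>0:\exists x\in\Omega \text{ with } U_r(x)\subset\Omega\}$ and the covering radius is $\mathrm{Covr}(D):=\inf\{R>0: \bigcup_{p\in D}B_R(p)=X\}\in[0,\infty]$ with $\inf\emptyset=\infty$. *)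

theory Defs
  imports "HOL-Analysis.Analysis"
begin

text \<open>Weighted graph on a countable vertex type 'a (X = UNIV).\<close>
definition weighted_graph :: "('a::countable \<Rightarrow> 'a \<Rightarrow> real) \<Rightarrow> ('a \<Rightarrow> real) \<Rightarrow> bool" where
  "weighted_graph b m \<longleftrightarrow>
     (\<forall>x y. b x y \<ge> 0) \<and> (\<forall>x y. b x y = b y x) \<and> (\<forall>x. b x x = 0) \<and>
     (\<forall>x. (\<lambda>y. b x y) summable_on UNIV) \<and> (\<forall>x. m x > 0)"

definition cond_B :: "('a \<Rightarrow> 'a \<Rightarrow> real) \<Rightarrow> ('a \<Rightarrow> real) \<Rightarrow> bool" where
  "cond_B b m \<longleftrightarrow> (\<exists>C. \<forall>x. (\<Sum>\<^sub>\<infinity>y. b x y) / m x \<le> C)"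

definition cond_M :: "('a \<Rightarrow> real) \<Rightarrow> bool" where
  "cond_M m \<longleftrightarrow> (\<exists>C. \<forall>x. m x \<le> C)"

definition is_path :: "('a \<Rightarrow> 'a \<Rightarrow> real) \<Rightarrow> 'a list \<Rightarrow> bool" where
  "is_path b \<gamma> \<longleftrightarrow> \<gamma> \<noteq> [] \<and> (\<forall>j < length \<gamma> - 1. b (\<gamma>!j) (\<gamma>!(j+1)) > 0)"

definition path_length :: "('a \<Rightarrow> 'a \<Rightarrow> real) \<Rightarrow> 'a list \<Rightarrow> real" where
  "path_length b \<gamma> = (\<Sum>j < length \<gamma> - 1. 1 / b (\<gamma>!j) (\<gamma>!(j+1)))"

definition graph_connected :: "('a \<Rightarrow> 'a \<Rightarrow> real) \<Rightarrow> bool" where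
  "graph_connected b \<longleftrightarrow> (\<forall>x y. \<exists>\<gamma>. is_path b \<gamma> \<and> hd \<gamma> = x \<and> last \<gamma> = y)"

definition gdist :: "('a \<Rightarrow> 'a \<Rightarrow> real) \<Rightarrow> 'a \<Rightarrow> 'a \<Rightarrow> real" where
  "gdist b x y = Inf {path_length b \<gamma> | \<gamma>. is_path b \<gamma> \<and> hd \<gamma> = x \<and> last \<gamma> = y}"

definition open_ball :: "('a \<Rightarrow> 'a \<Rightarrow> real) \<Rightarrow> 'a \<Rightarrow> real \<Rightarrow> 'a set" where
  "open_ball b x r = {y. gdist b x y < r}"

definition closed_ball :: "('a \<Rightarrow> 'a \<Rightarrow> real) \<Rightarrow> 'a \<Rightarrow> real \<Rightarrow> 'a set" where
  "closed_ball b x r = {y. gdist b x y \<le> r}"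

text \<open>Values in [0,\<infinity>] (ennreal): sup of empty set is 0, inf of empty set is \<infinity>.\<close>
definition inradius :: "('a \<Rightarrow> 'a \<Rightarrow> real) \<Rightarrow> 'a set \<Rightarrow> ennreal" where
  "inradius b \<Omega> = Sup (ennreal ` {r. r > 0 \<and> (\<exists>x\<in>\<Omega>. open_ball b x r \<subseteq> \<Omega>)})"

definition covradius :: "('a \<Rightarrow> 'a \<Rightarrow> real) \<Rightarrow> 'a set \<Rightarrow> ennreal" where
  "covradius b D = Inf (ennreal ` {R. R > 0 \<and> (\<Union>p\<in>D. closed_ball b p R) = UNIV})"

end

theory Submission
  imports Defs
begin

lemma rev_path:
  assumes sym: "\<And>x y. b x y = b y x" and p: "is_path b \<gamma>"
  shows "is_path b (rev \<gamma>) \<and> path_length b (rev \<gamma>) = path_length b \<gamma>"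
proof -
  define n where "n = length \<gamma>"
  have ne: "\<gamma> \<noteq> []" using p by (simp add: is_path_def)
  have e: "\<And>j. j < n - 1 \<Longrightarrow> b (rev \<gamma> ! j) (rev \<gamma> ! (j+1)) = b (\<gamma> ! (n - 1 - Suc j)) (\<gamma> ! (n - 1 - Suc j + 1))"
  proof -
    fix j assume j: "j < n - 1"
    have "rev \<gamma> ! j = \<gamma> ! (n - 1 - j)" using j by (simp add: rev_nth n_def)
    moreover have "rev \<gamma> ! (j+1) = \<gamma> ! (n - 1 - Suc j)" using j by (simp add: rev_nth n_def)
    moreover have "n - 1 - Suc j + 1 = n - 1 - j" using j by simp
    ultimately show "?thesis j" using sym by simp
  qed
  have "is_path b (rev \<gamma>)"
    unfolding is_path_def
  proof (intro conjI allI impI)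
    show "rev \<gamma> \<noteq> []" using ne by simp
    fix j assume "j < length (rev \<gamma>) - 1"
    hence j: "j < n - 1" by (simp add: n_def)
    have "n - 1 - Suc j < length \<gamma> - 1" using j by (simp add: n_def)
    hence "b (\<gamma> ! (n - 1 - Suc j)) (\<gamma> ! (n - 1 - Suc j + 1)) > 0" using p by (simp add: is_path_def)
    thus "b (rev \<gamma> ! j) (rev \<gamma> ! (j+1)) > 0" using e[OF j] by simp
  qed
  moreover have "path_length b (rev \<gamma>) = path_length b \<gamma>"
  proof -
    have "path_length b (rev \<gamma>) = (\<Sum>j<n-1. 1 / b (\<gamma> ! (n - 1 - Suc j)) (\<gamma> ! (n - 1 - Suc j + 1)))"
      unfolding path_length_def length_rev n_def[symmetric]
      apply (rule sum.cong[OF refl])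
      subgoal for j using e[of j] by (simp add: n_def)
      done
    also have "\<dots> = (\<Sum>j<n-1. 1 / b (\<gamma> ! j) (\<gamma> ! (j + 1)))"
      by (rule sum.nat_diff_reindex[where g = "\<lambda>j. 1 / b (\<gamma> ! j) (\<gamma> ! (j + 1))"])
    finally show ?thesis by (simp add: path_length_def n_def)
  qed
  ultimately show ?thesis by simp
qed

lemma gdist_sym:
  assumes sym: "\<And>x y. b x y = b y x"
  shows "gdist b x y = gdist b y x"
proof -
  have "{path_length b \<gamma> | \<gamma>. is_path b \<gamma> \<and> hd \<gamma> = x \<and> last \<gamma> = y}
      \<subseteq> {path_length b \<gamma> | \<gamma>. is_path b \<gamma> \<and> hd \<gamma> = y \<and> last \<gamma> = x}" for x y
  proof
    fix l assume "l \<in> {path_length b \<gamma> | \<gamma>. is_path b \<gamma> \<and> hd \<gamma> = x \<and> last \<gamma> = y}"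
    then obtain \<gamma> where g: "l = path_length b \<gamma>" "is_path b \<gamma>" "hd \<gamma> = x" "last \<gamma> = y" by blast
    have ne: "\<gamma> \<noteq> []" using g(2) by (simp add: is_path_def)
    show "l \<in> {path_length b \<gamma> | \<gamma>. is_path b \<gamma> \<and> hd \<gamma> = y \<and> last \<gamma> = x}"
    proof -
      have "is_path b (rev \<gamma>)" "hd (rev \<gamma>) = y" "last (rev \<gamma>) = x" "l = path_length b (rev \<gamma>)"
        using rev_path[OF sym g(2)] g ne by (simp_all add: hd_rev last_rev)
      thus ?thesis by blast
    qed
  qed
  hence "{path_length b \<gamma> | \<gamma>. is_path b \<gamma> \<and> hd \<gamma> = x \<and> last \<gamma> = y}
      = {path_length b \<gamma> | \<gamma>. is_path b \<gamma> \<and> hd \<gamma> = y \<and> last \<gamma> = x}" by blast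
  thus ?thesis by (simp add: gdist_def)
qed

lemma gdist_self:
  "gdist b x x \<le> 0"
proof -
  have "0 \<in> {path_length b \<gamma> | \<gamma>. is_path b \<gamma> \<and> hd \<gamma> = x \<and> last \<gamma> = x}"
    by (rule CollectI, rule exI[of _ "[x]"]) (simp add: is_path_def path_length_def)
  moreover have "bdd_below {path_length b \<gamma> | \<gamma>. is_path b \<gamma> \<and> hd \<gamma> = x \<and> last \<gamma> = x}"
  proof (rule bdd_belowI[of _ 0], clarify)
    fix \<gamma> assume "is_path b \<gamma>"
    hence "\<forall>j<length \<gamma> - 1. b (\<gamma>!j) (\<gamma>!(j+1)) > 0" by (simp add: is_path_def)
    thus "0 \<le> path_length b \<gamma>" unfolding path_length_def
      by (intro sum_nonneg) (simp add: less_imp_le)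
  qed
  ultimately show ?thesis unfolding gdist_def by (rule cInf_lower)
qed

theorem lemma3p6:
  fixes b :: "'a::countable \<Rightarrow> 'a \<Rightarrow> real" and m :: "'a \<Rightarrow> real" and D :: "'a set"
  assumes "weighted_graph b m" and "graph_connected b" and "cond_B b m" and "cond_M m"
  shows "covradius b D = inradius b (UNIV - D)"
proof -
  have sym: "\<And>x y. b x y = b y x" using assms(1) by (simp add: weighted_graph_def)
  have gs: "\<And>x y. gdist b x y = gdist b y x" by (rule gdist_sym[where b=b]) (rule sym)
  define A where "A = {r. r > 0 \<and> (\<exists>x\<in>UNIV - D. open_ball b x r \<subseteq> UNIV - D)}"
  define B where "B = {R. R > 0 \<and> (\<Union>p\<in>D. closed_ball b p R) = UNIV}"
  have ir: "inradius b (UNIV - D) = Sup (ennreal ` A)" by (simp add: inradius_def A_def)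
  have cr: "covradius b D = Inf (ennreal ` B)" by (simp add: covradius_def B_def)
  have le1: "Sup (ennreal ` A) \<le> Inf (ennreal ` B)"
  proof (rule Sup_least, rule Inf_greatest, clarify)
    fix r R assume r: "r \<in> A" and R: "R \<in> B"
    from r obtain x where x: "x \<notin> D" "open_ball b x r \<subseteq> UNIV - D" by (auto simp: A_def)
    from R have "x \<in> (\<Union>p\<in>D. closed_ball b p R)" by (simp add: B_def)
    then obtain p where p: "p \<in> D" "gdist b p x \<le> R" by (auto simp: closed_ball_def)
    have "p \<notin> open_ball b x r" using x p by auto
    hence "r \<le> gdist b x p" by (simp add: open_ball_def)
    thus "ennreal r \<le> ennreal R" using p gs[of x p] by (intro ennreal_leI) simp
  qed
  have le2: "Inf (ennreal ` B) \<le> Sup (ennreal ` A)"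
  proof (rule dense_ge)
    fix z assume z: "Sup (ennreal ` A) < z"
    show "Inf (ennreal ` B) \<le> z"
    proof (cases "z = top")
      case True thus ?thesis by simp
    next
      case False
      define R where "R = enn2real z"
      have zR: "z = ennreal R" using False by (simp add: R_def ennreal_enn2real_if)
      have Rpos: "R > 0" proof -
        have "0 < z" using z by (rule order_le_less_trans[OF zero_le])
        thus ?thesis using zR by simp
      qed
      have "R \<in> B"
      proof -
        have "y \<in> (\<Union>p\<in>D. closed_ball b p R)" for y
        proof (cases "y \<in> D")
          case True
          have "y \<in> closed_ball b y R" using gdist_self[of b y] Rpos by (simp add: closed_ball_def)
          thus ?thesis using True by blast
        next
          case False
          have "R \<notin> A"
          proof
            assume "R \<in> A"
            hence "ennreal R \<le> Sup (ennreal ` A)" by (simp add: Sup_upper)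
            thus False using z zR by simp
          qed
          hence "\<not> open_ball b y R \<subseteq> UNIV - D" using False Rpos by (auto simp: A_def)
          then obtain p where "p \<in> D" "gdist b y p < R" by (auto simp: open_ball_def)
          hence "p \<in> D" "y \<in> closed_ball b p R" using gs[of y p] by (auto simp: closed_ball_def)
          thus ?thesis by blast
        qed
        thus ?thesis using Rpos by (auto simp: B_def)
      qed
      thus ?thesis using zR by (simp add: Inf_lower)
    qed
  qed
  show ?thesis using le1 le2 ir cr by simp
qed

end
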